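(* Let $(E,\mu)$ and $(F,\nu)$ be fuzzy Riesz spaces and $T:E\rightarrow F$ a fuzzy Riesz homomorphism. If $I_z$ is the fuzzy principal ideal in $E$ generated by an element $z\in E^+$, then $T(I_z)$ is the fuzzy principal ideal in $T(E)$ generated by $Tz$.
   Context: A fuzzy order on a real vector space $E$ is a map $\mu:E\times E\to[0,1]$ with $\mu(x,x)=1$; $\mu(x,y)+\mu(y,x)>1$ implies $x=y$; and $\mu(x,z)\ge\sup_{y}\min(\mu(x,y),\mu(y,z))$. Write $x\le y$ for $\mu(x,y)>\frac12$; suprema/infima are taken with respect to this relation. $(E,\mu)$ is a fuzzy ordered linear space if $\mu(x_1,x_2)>\frac12$ implies $\mu(x_1,x_2)\le\mu(x_1+x,x_2+x)$ for all $x$ and $\mu(x_1,x_2)\le\mu(\alpha x_1,\alpha x_2)$ for all $\alpha>0$; it is a fuzzy Riesz space if $x\vee y=\sup\{x,y\}$ and $x\wedge y=\inf\{x,y\}$ exist for all $x,y$. $E^+=\{x: \mu(0,x)>\frac12\}$, $|x|=x\vee(-x)$. A fuzzy Riesz homomorphism is a linear map with $T(x\vee y)=Tx\vee Ty$; $T(E)$ is a fuzzy Riesz subspace of $F$ regarded as a fuzzy Riesz space with the restricted order. A fuzzy ideal is a vector subspace $A$ such that $\mu(|x|,|y|)>\frac12$ and $y\in A$ imply $x\in A$. The fuzzy principal ideal generated by $x$ is the smallest fuzzy ideal containing $x$. *)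

theory Defs
  imports Complex_Main
begin

text \<open>Fuzzy orders on a carrier V (a vector subspace of a real vector space).
  For the whole space E one takes V = UNIV; for T(E) one takes V = range T with
  the restricted fuzzy order.\<close>

definition fuzzy_order_on :: "'a set \<Rightarrow> ('a \<Rightarrow> 'a \<Rightarrow> real) \<Rightarrow> bool" where
  "fuzzy_order_on V \<mu> \<longleftrightarrow>
     (\<forall>x\<in>V. \<forall>y\<in>V. 0 \<le> \<mu> x y \<and> \<mu> x y \<le> 1) \<and>
     (\<forall>x\<in>V. \<mu> x x = 1) \<and>
     (\<forall>x\<in>V. \<forall>y\<in>V. \<mu> x y + \<mu> y x > 1 \<longrightarrow> x = y) \<and>
     (\<forall>x\<in>V. \<forall>z\<in>V. (SUP y\<in>V. min (\<mu> x y) (\<mu> y z)) \<le> \<mu> x z)"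

definition fle :: "('a \<Rightarrow> 'a \<Rightarrow> real) \<Rightarrow> 'a \<Rightarrow> 'a \<Rightarrow> bool" where
  "fle \<mu> x y \<longleftrightarrow> \<mu> x y > 1/2"

definition is_fsup_on :: "'a set \<Rightarrow> ('a \<Rightarrow> 'a \<Rightarrow> real) \<Rightarrow> 'a set \<Rightarrow> 'a \<Rightarrow> bool" where
  "is_fsup_on V \<mu> S s \<longleftrightarrow> s \<in> V \<and> (\<forall>x\<in>S. fle \<mu> x s) \<and>
     (\<forall>u\<in>V. (\<forall>x\<in>S. fle \<mu> x u) \<longrightarrow> fle \<mu> s u)"

definition is_finf_on :: "'a set \<Rightarrow> ('a \<Rightarrow> 'a \<Rightarrow> real) \<Rightarrow> 'a set \<Rightarrow> 'a \<Rightarrow> bool" where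
  "is_finf_on V \<mu> S s \<longleftrightarrow> s \<in> V \<and> (\<forall>x\<in>S. fle \<mu> s x) \<and>
     (\<forall>u\<in>V. (\<forall>x\<in>S. fle \<mu> u x) \<longrightarrow> fle \<mu> u s)"

definition fsup :: "'a set \<Rightarrow> ('a \<Rightarrow> 'a \<Rightarrow> real) \<Rightarrow> 'a \<Rightarrow> 'a \<Rightarrow> 'a" where
  "fsup V \<mu> x y = (THE s. is_fsup_on V \<mu> {x, y} s)"

definition fabs :: "'a set \<Rightarrow> ('a \<Rightarrow> 'a \<Rightarrow> real) \<Rightarrow> 'a::real_vector \<Rightarrow> 'a" where
  "fabs V \<mu> x = fsup V \<mu> x (- x)"

definition fuzzy_ordered_linear_space_on ::
    "'a::real_vector set \<Rightarrow> ('a \<Rightarrow> 'a \<Rightarrow> real) \<Rightarrow> bool" where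
  "fuzzy_ordered_linear_space_on V \<mu> \<longleftrightarrow> subspace V \<and> fuzzy_order_on V \<mu> \<and>
     (\<forall>x1\<in>V. \<forall>x2\<in>V. \<mu> x1 x2 > 1/2 \<longrightarrow>
        (\<forall>x\<in>V. \<mu> x1 x2 \<le> \<mu> (x1 + x) (x2 + x)) \<and>
        (\<forall>\<alpha>::real. \<alpha> > 0 \<longrightarrow> \<mu> x1 x2 \<le> \<mu> (\<alpha> *\<^sub>R x1) (\<alpha> *\<^sub>R x2)))"

definition fuzzy_riesz_space_on :: "'a::real_vector set \<Rightarrow> ('a \<Rightarrow> 'a \<Rightarrow> real) \<Rightarrow> bool" where
  "fuzzy_riesz_space_on V \<mu> \<longleftrightarrow> fuzzy_ordered_linear_space_on V \<mu> \<and>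
     (\<forall>x\<in>V. \<forall>y\<in>V. (\<exists>s. is_fsup_on V \<mu> {x, y} s) \<and> (\<exists>i. is_finf_on V \<mu> {x, y} i))"

abbreviation fuzzy_riesz_space :: "('a::real_vector \<Rightarrow> 'a \<Rightarrow> real) \<Rightarrow> bool" where
  "fuzzy_riesz_space \<mu> \<equiv> fuzzy_riesz_space_on UNIV \<mu>"

definition fuzzy_riesz_hom ::
    "('a::real_vector \<Rightarrow> 'a \<Rightarrow> real) \<Rightarrow> ('b::real_vector \<Rightarrow> 'b \<Rightarrow> real) \<Rightarrow> ('a \<Rightarrow> 'b) \<Rightarrow> bool" where
  "fuzzy_riesz_hom \<mu> \<nu> T \<longleftrightarrow> linear T \<and>
     (\<forall>x y. T (fsup UNIV \<mu> x y) = fsup UNIV \<nu> (T x) (T y))"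

definition fuzzy_ideal_on :: "'a::real_vector set \<Rightarrow> ('a \<Rightarrow> 'a \<Rightarrow> real) \<Rightarrow> 'a set \<Rightarrow> bool" where
  "fuzzy_ideal_on V \<mu> A \<longleftrightarrow> subspace A \<and> A \<subseteq> V \<and>
     (\<forall>x\<in>V. \<forall>y\<in>A. fle \<mu> (fabs V \<mu> x) (fabs V \<mu> y) \<longrightarrow> x \<in> A)"

definition fuzzy_principal_ideal_on ::
    "'a::real_vector set \<Rightarrow> ('a \<Rightarrow> 'a \<Rightarrow> real) \<Rightarrow> 'a \<Rightarrow> 'a set" where
  "fuzzy_principal_ideal_on V \<mu> x = \<Inter> {A. fuzzy_ideal_on V \<mu> A \<and> x \<in> A}"

definition fpos :: "('a::real_vector \<Rightarrow> 'a \<Rightarrow> real) \<Rightarrow> 'a set" where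
  "fpos \<mu> = {x. \<mu> 0 x > 1/2}"

end

theory Submission
  imports Defs
begin

definition finf :: "('a::real_vector \<Rightarrow> 'a \<Rightarrow> real) \<Rightarrow> 'a \<Rightarrow> 'a \<Rightarrow> 'a" where
  "finf m x y = x + y - fsup UNIV m x y"

locale frs =
  fixes m :: "'a::real_vector \<Rightarrow> 'a \<Rightarrow> real"
  assumes R: "fuzzy_riesz_space m"
begin

lemma ols: "fuzzy_ordered_linear_space_on UNIV m"
  using R by (simp add: fuzzy_riesz_space_on_def)

lemma fo: "fuzzy_order_on UNIV m"
  using ols by (simp add: fuzzy_ordered_linear_space_on_def)

lemma refl: "fle m x x"
  using fo by (simp add: fuzzy_order_on_def fle_def)

lemma antisym: "fle m x y \<Longrightarrow> fle m y x \<Longrightarrow> x = y"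
  using fo unfolding fuzzy_order_on_def fle_def by auto

lemma trans: assumes "fle m x y" "fle m y z" shows "fle m x z"
proof -
  have b: "\<forall>w. min (m x w) (m w z) \<le> 1" using fo unfolding fuzzy_order_on_def
    by (metis UNIV_I min.coboundedI1)
  have "min (m x y) (m y z) \<le> (SUP w. min (m x w) (m w z))"
    by (rule cSUP_upper) (use b in \<open>auto simp: bdd_above_def\<close>)
  also have "\<dots> \<le> m x z" using fo unfolding fuzzy_order_on_def by auto
  finally show ?thesis using assms by (simp add: fle_def)
qed

lemma add: "fle m x y \<Longrightarrow> fle m (x + a) (y + a)"
  using ols unfolding fuzzy_ordered_linear_space_on_def fle_def
  by (meson UNIV_I order_less_le_trans)

lemma add': "fle m x y \<Longrightarrow> x' = x + a \<Longrightarrow> y' = y + a \<Longrightarrow> fle m x' y'"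
  using add by simp

lemma scale: "fle m x y \<Longrightarrow> (c::real) > 0 \<Longrightarrow> fle m (c *\<^sub>R x) (c *\<^sub>R y)"
  using ols unfolding fuzzy_ordered_linear_space_on_def fle_def
  by (meson UNIV_I order_less_le_trans)

lemma sup_ex: "\<exists>s. is_fsup_on UNIV m {x, y} s"
  using R by (simp add: fuzzy_riesz_space_on_def)

lemma sup_uniq: "is_fsup_on UNIV m S s \<Longrightarrow> is_fsup_on UNIV m S s' \<Longrightarrow> s = s'"
  unfolding is_fsup_on_def using antisym by blast

lemma sup_unique: "is_fsup_on UNIV m {x, y} s \<Longrightarrow> fsup UNIV m x y = s"
  unfolding fsup_def using sup_uniq by blast

lemma sup: "is_fsup_on UNIV m {x, y} (fsup UNIV m x y)"
  using sup_ex sup_unique by metis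

lemma sup_ge1: "fle m x (fsup UNIV m x y)"
  using sup unfolding is_fsup_on_def by blast

lemma sup_ge2: "fle m y (fsup UNIV m x y)"
  using sup unfolding is_fsup_on_def by blast

lemma sup_least: "fle m x u \<Longrightarrow> fle m y u \<Longrightarrow> fle m (fsup UNIV m x y) u"
  using sup unfolding is_fsup_on_def by blast

lemma sup_comm: "fsup UNIV m x y = fsup UNIV m y x"
  by (simp add: fsup_def insert_commute)

lemma sup_eq: "fle m x y \<Longrightarrow> fsup UNIV m x y = y"
  by (rule sup_unique) (auto simp: is_fsup_on_def refl)

lemma sup_add: "fsup UNIV m (x + a) (y + a) = fsup UNIV m x y + a"
proof (rule sup_unique)
  show "is_fsup_on UNIV m {x + a, y + a} (fsup UNIV m x y + a)"
    unfolding is_fsup_on_def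
  proof (intro conjI ballI impI)
    fix u assume "\<forall>v\<in>{x + a, y + a}. fle m v u"
    then have "fle m (x + a) u" "fle m (y + a) u" by auto
    then have "fle m x (u - a)" "fle m y (u - a)"
      by (auto elim: add'[where a="-a"])
    then have "fle m (fsup UNIV m x y) (u - a)" by (rule sup_least)
    then show "fle m (fsup UNIV m x y + a) u" by (rule add'[where a=a]) auto
  qed (auto intro: add sup_ge1 sup_ge2)
qed

lemma add_mono: "fle m x y \<Longrightarrow> fle m u v \<Longrightarrow> fle m (x + u) (y + v)"
  by (metis add add.commute trans)

lemma neg: "fle m x y \<Longrightarrow> fle m (- y) (- x)"
  by (erule add'[where a="- x - y"]) auto

lemma sub_mono: "fle m x y \<Longrightarrow> fle m u v \<Longrightarrow> fle m (x - v) (y - u)"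
  using add_mono[of x y "-v" "-u"] neg by simp

lemma abs_ge0: "fle m 0 (fabs UNIV m x)"
proof -
  have "fle m x (fabs UNIV m x)" "fle m (-x) (fabs UNIV m x)"
    unfolding fabs_def by (rule sup_ge1, rule sup_ge2)
  then have "fle m (x + -x) (fabs UNIV m x + fabs UNIV m x)" by (rule add_mono)
  then have "fle m ((1/2) *\<^sub>R 0) ((1/2) *\<^sub>R (fabs UNIV m x + fabs UNIV m x))"
    by (intro scale) simp_all
  moreover have "(1/2::real) *\<^sub>R (fabs UNIV m x + fabs UNIV m x) = fabs UNIV m x"
    by (simp add: scaleR_2[symmetric] del: scaleR_2)
  ultimately show ?thesis by simp
qed

lemma inf_le1: "fle m (finf m x y) x"
  unfolding finf_def by (rule add'[OF sup_ge2, where a="x - fsup UNIV m x y"]) auto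

lemma inf_le2: "fle m (finf m x y) y"
  unfolding finf_def by (rule add'[OF sup_ge1, where a="y - fsup UNIV m x y"]) auto

lemma inf_greatest: assumes "fle m u x" "fle m u y" shows "fle m u (finf m x y)"
proof -
  have "fle m x (x + y - u)" using assms(2) by (rule add'[where a="x - u"]) auto
  moreover have "fle m y (x + y - u)" using assms(1) by (rule add'[where a="y - u"]) auto
  ultimately have "fle m (fsup UNIV m x y) (x + y - u)" by (rule sup_least)
  then show ?thesis unfolding finf_def by (rule add'[where a="u - fsup UNIV m x y"]) auto
qed

lemma inf_eq: "fle m x y \<Longrightarrow> finf m x y = x"
  unfolding finf_def by (simp add: sup_eq)

lemma pos_neg: "fsup UNIV m x 0 - fsup UNIV m (-x) 0 = x"
proof -
  have "fsup UNIV m x 0 + (-x) = fsup UNIV m (x + -x) (0 + -x)" by (rule sup_add[symmetric])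
  also have "\<dots> = fsup UNIV m (-x) 0" by (simp add: sup_comm)
  finally show ?thesis by (simp add: algebra_simps)
qed

end

lemma abs_range:
  assumes E: "frs \<mu>" and F: "frs \<nu>" and H: "fuzzy_riesz_hom \<mu> \<nu> T"
  shows "fabs (range T) \<nu> (T x) = T (fabs UNIV \<mu> x)"
proof -
  interpret F: frs \<nu> by (rule F)
  have lin: "linear T" using H by (simp add: fuzzy_riesz_hom_def)
  have eq: "T (fabs UNIV \<mu> x) = fsup UNIV \<nu> (T x) (- T x)"
    using H lin unfolding fuzzy_riesz_hom_def fabs_def by (simp add: linear_neg)
  have S: "is_fsup_on UNIV \<nu> {T x, - T x} (T (fabs UNIV \<mu> x))"
    unfolding eq by (rule F.sup)
  have S': "is_fsup_on (range T) \<nu> {T x, - T x} (T (fabs UNIV \<mu> x))"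
    using S unfolding is_fsup_on_def by auto
  have d: "fabs (range T) \<nu> (T x) = (THE s. is_fsup_on (range T) \<nu> {T x, - T x} s)"
    by (simp add: fabs_def fsup_def)
  show ?thesis unfolding d
  proof (rule the_equality)
    fix s assume "is_fsup_on (range T) \<nu> {T x, - T x} s"
    with S' show "s = T (fabs UNIV \<mu> x)" unfolding is_fsup_on_def
      using F.antisym by blast
  qed (rule S')
qed

theorem theorem2p6:
  fixes \<mu> :: "'a::real_vector \<Rightarrow> 'a \<Rightarrow> real"
    and \<nu> :: "'b::real_vector \<Rightarrow> 'b \<Rightarrow> real"
    and T :: "'a \<Rightarrow> 'b" and z :: 'a
  assumes "fuzzy_riesz_space \<mu>" and "fuzzy_riesz_space \<nu>"
    and "fuzzy_riesz_hom \<mu> \<nu> T"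
    and "z \<in> fpos \<mu>"
  shows "T ` fuzzy_principal_ideal_on UNIV \<mu> z
           = fuzzy_principal_ideal_on (range T) \<nu> (T z)"
proof -
  interpret E: frs \<mu> using assms(1) by (rule frs.intro)
  interpret F: frs \<nu> using assms(2) by (rule frs.intro)
  have EF: "frs \<mu>" "frs \<nu>" using assms(1,2) by (auto intro: frs.intro)
  have lin: "linear T" using assms(3) by (simp add: fuzzy_riesz_hom_def)
  have Tsup: "T (fsup UNIV \<mu> x y) = fsup UNIV \<nu> (T x) (T y)" for x y
    using assms(3) by (simp add: fuzzy_riesz_hom_def)
  have Tinf: "T (finf \<mu> x y) = finf \<nu> (T x) (T y)" for x y
    by (simp add: finf_def Tsup linear_add[OF lin] linear_diff[OF lin])
  have Tabs: "T (fabs UNIV \<mu> x) = fabs UNIV \<nu> (T x)" for x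
    by (simp add: fabs_def Tsup linear_neg[OF lin])
  have absR: "fabs (range T) \<nu> (T x) = T (fabs UNIV \<mu> x)" for x
    by (rule abs_range[OF EF assms(3)])
  have Tpos: "fle \<nu> (T a) (T b)" if "fle \<mu> a b" for a b
    using F.sup_ge1[of "T a" "T b"] Tsup[of a b] E.sup_eq[OF that] by simp
  define Iz where "Iz = fuzzy_principal_ideal_on UNIV \<mu> z"
  have zI: "z \<in> Iz" unfolding Iz_def fuzzy_principal_ideal_on_def by auto
  have Iid: "x \<in> Iz" if "y \<in> Iz" "fle \<mu> (fabs UNIV \<mu> x) (fabs UNIV \<mu> y)" for x y
    using that unfolding Iz_def fuzzy_principal_ideal_on_def fuzzy_ideal_on_def by auto
  have Isub: "subspace Iz"
    unfolding Iz_def fuzzy_principal_ideal_on_def fuzzy_ideal_on_def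
    by (rule subspace_Inter) auto
  show ?thesis
  proof
    show "T ` fuzzy_principal_ideal_on UNIV \<mu> z \<subseteq> fuzzy_principal_ideal_on (range T) \<nu> (T z)"
    proof
      fix t assume "t \<in> T ` fuzzy_principal_ideal_on UNIV \<mu> z"
      then obtain x where x: "x \<in> Iz" "t = T x" unfolding Iz_def by auto
      show "t \<in> fuzzy_principal_ideal_on (range T) \<nu> (T z)"
        unfolding fuzzy_principal_ideal_on_def
      proof
        fix B assume "B \<in> {A. fuzzy_ideal_on (range T) \<nu> A \<and> T z \<in> A}"
        then have B: "fuzzy_ideal_on (range T) \<nu> B" "T z \<in> B" by auto
        have "fuzzy_ideal_on UNIV \<mu> (T -` B)"
          unfolding fuzzy_ideal_on_def
        proof (intro conjI ballI impI)
          show "subspace (T -` B)"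
            using B(1) lin by (simp add: fuzzy_ideal_on_def real_vector.linear_subspace_vimage)
          fix a b assume ab: "b \<in> T -` B" "fle \<mu> (fabs UNIV \<mu> a) (fabs UNIV \<mu> b)"
          then have "fle \<nu> (fabs (range T) \<nu> (T a)) (fabs (range T) \<nu> (T b))"
            by (simp add: absR Tpos)
          then show "a \<in> T -` B" using B(1) ab(1) unfolding fuzzy_ideal_on_def by auto
        qed auto
        then have "Iz \<subseteq> T -` B" using B(2) unfolding Iz_def fuzzy_principal_ideal_on_def by auto
        then show "t \<in> B" using x by auto
      qed
    qed
  next
    have "fuzzy_ideal_on (range T) \<nu> (T ` Iz)"
      unfolding fuzzy_ideal_on_def
    proof (intro conjI ballI impI)
      show "subspace (T ` Iz)" using Isub lin by (simp add: real_vector.linear_subspace_image)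
      show "T ` Iz \<subseteq> range T" by auto
      fix t s assume t: "t \<in> range T" and s: "s \<in> T ` Iz"
        and le: "fle \<nu> (fabs (range T) \<nu> t) (fabs (range T) \<nu> s)"
      obtain x0 where x0: "t = T x0" using t by auto
      obtain y where y: "y \<in> Iz" "s = T y" using s by auto
      have le': "fle \<nu> (T (fabs UNIV \<mu> x0)) (T (fabs UNIV \<mu> y))"
        using le by (simp add: x0 y absR)
      define w where "w = fabs UNIV \<mu> y"
      define p where "p = fsup UNIV \<mu> x0 0"
      define n where "n = fsup UNIV \<mu> (-x0) 0"
      define a where "a = finf \<mu> p w"
      define b where "b = finf \<mu> n w"
      have Tw0: "fle \<nu> 0 (T w)" unfolding w_def Tabs by (rule F.abs_ge0)
      have Tx0w: "fle \<nu> (T x0) (T w)"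
        using F.trans[OF F.sup_ge1[of "T x0" "- T x0", folded fabs_def] le'[unfolded Tabs]]
        by (simp add: w_def Tabs)
      have Tx0w': "fle \<nu> (- T x0) (T w)"
        using F.trans[OF F.sup_ge2[of "- T x0" "T x0", folded fabs_def] le'[unfolded Tabs]]
        by (simp add: w_def Tabs)
      have Tp: "T p = fsup UNIV \<nu> (T x0) 0" by (simp add: p_def Tsup linear_0[OF lin])
      have Tn: "T n = fsup UNIV \<nu> (- T x0) 0" by (simp add: n_def Tsup linear_0[OF lin] linear_neg[OF lin])
      have Ta: "T a = T p" unfolding a_def Tinf
        by (rule F.inf_eq) (simp add: Tp F.sup_least Tx0w Tw0)
      have Tb: "T b = T n" unfolding b_def Tinf
        by (rule F.inf_eq) (simp add: Tn F.sup_least Tx0w' Tw0)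
      have "T (a - b) = T (p - n)" by (simp add: linear_diff[OF lin] Ta Tb)
      also have "p - n = x0" unfolding p_def n_def by (rule E.pos_neg)
      finally have T1: "T (a - b) = t" using x0 by simp
      have w0: "fle \<mu> 0 w" unfolding w_def by (rule E.abs_ge0)
      have a0: "fle \<mu> 0 a" unfolding a_def p_def by (rule E.inf_greatest[OF E.sup_ge2 w0])
      have b0: "fle \<mu> 0 b" unfolding b_def n_def by (rule E.inf_greatest[OF E.sup_ge2 w0])
      have aw: "fle \<mu> a w" unfolding a_def by (rule E.inf_le2)
      have bw: "fle \<mu> b w" unfolding b_def by (rule E.inf_le2)
      have "fle \<mu> (a - b) (a - 0)" by (rule E.sub_mono[OF E.refl b0])
      then have 1: "fle \<mu> (a - b) w" using aw E.trans by simp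
      have "fle \<mu> (b - a) (b - 0)" by (rule E.sub_mono[OF E.refl a0])
      then have 2: "fle \<mu> (b - a) w" using bw E.trans by simp
      have "fle \<mu> (fabs UNIV \<mu> (a - b)) (fabs UNIV \<mu> y)"
        using E.sup_least[OF 1 2] by (simp add: fabs_def w_def)
      then have "a - b \<in> Iz" using Iid y(1) by blast
      then show "t \<in> T ` Iz" using T1 by force
    qed
    moreover have "T z \<in> T ` Iz" using zI by auto
    ultimately show "fuzzy_principal_ideal_on (range T) \<nu> (T z) \<subseteq> T ` fuzzy_principal_ideal_on UNIV \<mu> z"
      unfolding fuzzy_principal_ideal_on_def Iz_def by blast
  qed
qed

end
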